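(* Let $1\le k<n$, let $\kappa_1,\dots,\kappa_n\in\mathbb C$ be pairwise distinct and $\beta_1,\dots,\beta_{n-1}\in\mathbb C^*$, with $\beta_0:=1$, and $I_k=\{1,\dots,k\}$. Let $A$ be the $k\times n$ matrix with $A_{ij}=\delta_{ij}$ for $j\le k$ and $$A_{ij}=\frac{\beta_{i-1}}{\beta_{j-1}(\kappa_j-\kappa_i)^2}\prod_{l\in I_k,\,l\ne i}\frac{\kappa_i-\kappa_l}{\kappa_j-\kappa_l}\qquad (i\le k<j\le n).$$ For every $k$-subset $J\subset[n]$, write $J=(I_k\setminus\{i_1,\dots,i_s\})\cup\{j_1,\dots,j_s\}$ with $i_1<\dots<i_s$ in $I_k$, $j_1<\dots<j_s$ in $[n]\setminus I_k$, $0\le s\le\min\{k,n-k\}$, and set $$\alpha_J=\frac{\prod_{1\le l<m\le s}(\kappa_{i_m}-\kappa_{i_l})^2(\kappa_{j_m}-\kappa_{j_l})^2}{\prod_{1\le l,m\le s}(\kappa_{j_m}-\kappa_{i_l})^2}\prod_{l=1}^s\frac{\beta_{i_l-1}}{\beta_{j_l-1}}$$ (empty products equal $1$). Then the maximal minor of $A$ on columns $J$ satisfies $A_J=\alpha_J\,K_{I_k}/K_J$, where $K_J=\prod_{i<j,\ i,j\in J}(\kappa_j-\kappa_i)$.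
   Context: Here $n=g+1$ for the genus-$g$ banana graph; $\alpha_J$ are the coefficients $\exp[\tfrac12\mathbf c_J^TR\mathbf c_J]\exp[\mathbf c_J^T\mathbf D]$ of the degenerate theta function at the Delaunay vertex $\mathbf c_J$, with $\mathbf D=(\log\beta_1,\dots,\log\beta_g)$, written explicitly. *)

theory Defs
  imports Complex_Main "Jordan_Normal_Form.Determinant"
begin

text \<open>Indices are 1-based as in the paper: kappa 1 .. kappa n, beta 1 .. beta (n-1);
  beta_0 := 1 is built in via bet.\<close>

definition bet :: "(nat \<Rightarrow> complex) \<Rightarrow> nat \<Rightarrow> complex" where
  "bet beta i = (if i = 0 then 1 else beta i)"

definition Aent :: "nat \<Rightarrow> (nat \<Rightarrow> complex) \<Rightarrow> (nat \<Rightarrow> complex) \<Rightarrow> nat \<Rightarrow> nat \<Rightarrow> complex" where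
  "Aent k kappa beta i j =
     (if j \<le> k then (if i = j then 1 else 0)
      else bet beta (i - 1) / (bet beta (j - 1) * (kappa j - kappa i)^2) *
           (\<Prod>l\<in>{1..k} - {i}. (kappa i - kappa l) / (kappa j - kappa l)))"

definition Amat :: "nat \<Rightarrow> nat \<Rightarrow> (nat \<Rightarrow> complex) \<Rightarrow> (nat \<Rightarrow> complex) \<Rightarrow> complex mat" where
  "Amat k n kappa beta = mat k n (\<lambda>(r, c). Aent k kappa beta (r + 1) (c + 1))"

definition minorA :: "nat \<Rightarrow> nat \<Rightarrow> (nat \<Rightarrow> complex) \<Rightarrow> (nat \<Rightarrow> complex) \<Rightarrow> nat set \<Rightarrow> complex" where
  "minorA k n kappa beta J =
     (let cs = sorted_list_of_set J
      in det (mat k k (\<lambda>(r, c). Amat k n kappa beta $$ (r, cs ! c - 1))))"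

definition KJ :: "(nat \<Rightarrow> complex) \<Rightarrow> nat set \<Rightarrow> complex" where
  "KJ kappa J = (\<Prod>p\<in>{(i, j). i \<in> J \<and> j \<in> J \<and> i < j}. kappa (snd p) - kappa (fst p))"

definition alphaJ :: "nat \<Rightarrow> (nat \<Rightarrow> complex) \<Rightarrow> (nat \<Rightarrow> complex) \<Rightarrow> nat set \<Rightarrow> complex" where
  "alphaJ k kappa beta J =
     (let is = sorted_list_of_set ({1..k} - J);
          js = sorted_list_of_set (J - {1..k});
          s = length js
      in (\<Prod>p\<in>{(l, m). l < m \<and> m < s}.
             (kappa (is ! snd p) - kappa (is ! fst p))^2 * (kappa (js ! snd p) - kappa (js ! fst p))^2)
         / (\<Prod>p\<in>{..<s} \<times> {..<s}. (kappa (js ! snd p) - kappa (is ! fst p))^2)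
         * (\<Prod>l<s. bet beta (is ! l - 1) / bet beta (js ! l - 1)))"

end

theory Submission
  imports Defs
begin

fun vprod :: "complex list \<Rightarrow> complex" where
  "vprod [] = 1"
| "vprod (x # xs) = prod_list (map (\<lambda>y. y - x) xs) * vprod xs"

definition vand :: "complex list \<Rightarrow> complex mat" where
  "vand ys = mat (length ys) (length ys) (\<lambda>(i,j). (ys!j)^i)"

lemma det_diag_mat:
  "det (mat m m (\<lambda>(i,j). if i = j then f j else 0)) = (\<Prod>j<m. (f j :: complex))"
proof -
  have "det (mat m m (\<lambda>(i,j). if i = j then f j else 0)) =
        prod_list (diag_mat (mat m m (\<lambda>(i,j). if i = j then f j else (0::complex))))"
    by (rule det_upper_triangular[of _ m]) (auto simp: upper_triangular_def)
  also have "\<dots> = (\<Prod>j<m. f j)"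
    by (simp add: diag_mat_def prod.list_conv_set_nth atLeast0LessThan)
  finally show ?thesis .
qed

lemma det_vand: "det (vand ys) = vprod ys"
proof (induction ys)
  case Nil
  then show ?case by (simp add: vand_def)
next
  case (Cons x xs)
  define m where "m = length xs"
  define n where "n = Suc m"
  define V where "V = vand (x # xs)"
  define B :: "complex mat" where "B = mat n n (\<lambda>(i,j). if i = j then 1 else if i = Suc j then - x else 0)"
  have Vc: "V \<in> carrier_mat n n" by (simp add: V_def vand_def n_def m_def)
  have Bc: "B \<in> carrier_mat n n" by (simp add: B_def)
  have detB: "det B = 1"
  proof -
    have "det B = prod_list (diag_mat B)"
      by (rule det_lower_triangular[of n]) (auto simp: B_def)
    also have "\<dots> = (\<Prod>i\<in>{0..<n}. B $$ (i,i))"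
      by (simp add: diag_mat_def B_def prod.list_conv_set_nth)
    also have "\<dots> = 1" by (rule prod.neutral) (simp add: B_def)
    finally show ?thesis .
  qed
  define C where "C = B * V"
  have Cc: "C \<in> carrier_mat n n" using Bc Vc by (simp add: C_def)
  have Cent: "C $$ (i, j) = (if i = 0 then 1 else ((x#xs)!j)^(i-1) * ((x#xs)!j - x))"
    if "i < n" "j < n" for i j
  proof -
    have "C $$ (i,j) = (\<Sum>l<n. B $$ (i,l) * V $$ (l,j))"
      using that Bc Vc by (simp add: C_def scalar_prod_def atLeast0LessThan)
    also have "\<dots> = (\<Sum>l<n. (if l = i then V $$ (l,j) else 0) + (if Suc l = i then - x * V $$ (l,j) else 0))"
      by (rule sum.cong) (use that in \<open>auto simp: B_def\<close>)
    also have "\<dots> = V $$ (i,j) + (if i = 0 then 0 else - x * V $$ (i - 1, j))"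
    proof (cases "i = 0")
      case True
      then show ?thesis using that by (simp add: sum.distrib)
    next
      case False
      have "(\<Sum>l<n. if Suc l = i then - x * V $$ (l, j) else 0) = (\<Sum>l<n. if l = i - 1 then - x * V $$ (l, j) else 0)"
        by (rule sum.cong) (use False in auto)
      also have "\<dots> = - x * V $$ (i - 1, j)" using that False by (simp add: sum.delta')
      finally show ?thesis using False that by (simp add: sum.distrib)
    qed
    also have "\<dots> = (if i = 0 then 1 else ((x#xs)!j)^(i-1) * ((x#xs)!j - x))"
      using that by (cases i) (auto simp: V_def vand_def n_def m_def algebra_simps)
    finally show ?thesis .
  qed
  have detC: "det C = det V" using Bc Vc detB by (simp add: C_def det_mult)
  have "det C = (\<Sum>i<n. C $$ (i,0) * cofactor C i 0)"
    by (rule laplace_expansion_column[OF Cc]) (simp add: n_def)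
  also have "\<dots> = C $$ (0,0) * cofactor C 0 0 + (\<Sum>i<m. C $$ (Suc i,0) * cofactor C (Suc i) 0)"
    unfolding n_def by (rule sum.lessThan_Suc_shift)
  also have "(\<Sum>i<m. C $$ (Suc i,0) * cofactor C (Suc i) 0) = 0"
    by (rule sum.neutral) (auto simp: Cent n_def)
  also have "C $$ (0,0) = 1" by (simp add: Cent n_def)
  also have "cofactor C 0 0 = det (mat_delete C 0 0)" by (simp add: cofactor_def)
  also have "mat_delete C 0 0 = vand xs * mat m m (\<lambda>(i,j). if i = j then xs!j - x else 0)"
  proof (rule eq_matI)
    fix i j assume ij: "i < dim_row (vand xs * mat m m (\<lambda>(i,j). if i = j then xs!j - x else 0))"
      "j < dim_col (vand xs * mat m m (\<lambda>(i,j). if i = j then xs!j - x else 0))"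
    then have i: "i < m" and j: "j < m" by (auto simp: vand_def m_def)
    have "(vand xs * mat m m (\<lambda>(i,j). if i = j then xs!j - x else 0)) $$ (i,j)
       = (\<Sum>l<m. (xs!l)^i * (if l = j then xs!j - x else 0))"
      using i j by (simp add: vand_def m_def scalar_prod_def atLeast0LessThan)
    also have "\<dots> = (xs!j)^i * (xs!j - x)"
      using j by (simp add: if_distrib sum.delta' cong: if_cong)
    also have "\<dots> = mat_delete C 0 0 $$ (i,j)"
      using i j Cc by (simp add: mat_delete_def Cent n_def)
    finally show "mat_delete C 0 0 $$ (i, j) = (vand xs * mat m m (\<lambda>(i,j). if i = j then xs!j - x else 0)) $$ (i,j)" by simp
  qed (use Cc in \<open>auto simp: vand_def m_def n_def\<close>)
  also have "det (vand xs * mat m m (\<lambda>(i,j). if i = j then xs!j - x else 0))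
     = det (vand xs) * (\<Prod>j<m. xs!j - x)"
    by (subst det_mult[of _ m]) (auto simp: vand_def m_def det_diag_mat)
  finally have "det C = vprod xs * (\<Prod>j<m. xs!j - x)" using Cons.IH by simp
  moreover have "(\<Prod>j<m. xs!j - x) = prod_list (map (\<lambda>y. y - x) xs)"
    by (simp add: prod.list_conv_set_nth m_def atLeast0LessThan)
  ultimately show ?case using detC by (simp add: V_def mult.commute)
qed

lemma KJ_insert_min:
  assumes "finite J'" "\<And>j. j \<in> J' \<Longrightarrow> a < j"
  shows "KJ kappa (insert a J') = (\<Prod>j\<in>J'. kappa j - kappa a) * KJ kappa J'"
proof -
  have a: "a \<notin> J'" using assms(2) by blast
  have eq: "{(i, j). i \<in> insert a J' \<and> j \<in> insert a J' \<and> i < j} =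
        (\<lambda>j. (a, j)) ` J' \<union> {(i, j). i \<in> J' \<and> j \<in> J' \<and> i < j}"
    using assms(2) by (auto dest: assms(2) less_trans)
  have fin: "finite {(i, j). i \<in> J' \<and> j \<in> J' \<and> i < j}"
    by (rule finite_subset[of _ "J' \<times> J'"]) (use assms(1) in auto)
  have disj: "(\<lambda>j. (a, j)) ` J' \<inter> {(i, j). i \<in> J' \<and> j \<in> J' \<and> i < j} = {}"
    using a by auto
  have "KJ kappa (insert a J') = (\<Prod>p\<in>(\<lambda>j. (a, j)) ` J'. kappa (snd p) - kappa (fst p)) * KJ kappa J'"
    unfolding KJ_def eq by (rule prod.union_disjoint) (use assms(1) fin disj in auto)
  also have "(\<Prod>p\<in>(\<lambda>j. (a, j)) ` J'. kappa (snd p) - kappa (fst p)) = (\<Prod>j\<in>J'. kappa j - kappa a)"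
    by (subst prod.reindex) (auto simp: inj_on_def)
  finally show ?thesis .
qed

lemma KJ_vprod: "finite J \<Longrightarrow> KJ kappa J = vprod (map kappa (sorted_list_of_set J))"
proof (induction "card J" arbitrary: J)
  case 0
  then have "J = {}" by simp
  then show ?case by (simp add: KJ_def)
next
  case (Suc c)
  then have ne: "J \<noteq> {}" by auto
  define a where "a = Min J"
  define J' where "J' = J - {a}"
  have aJ: "a \<in> J" using Suc.prems ne by (simp add: a_def)
  have J: "J = insert a J'" using aJ by (auto simp: J'_def)
  have fin: "finite J'" using Suc.prems by (simp add: J'_def)
  have lt: "\<And>j. j \<in> J' \<Longrightarrow> a < j"
    using Suc.prems by (auto simp: J'_def a_def intro: le_neq_implies_less)
  have cJ': "c = card J'" using Suc.hyps(2) aJ Suc.prems by (simp add: J'_def)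
  have sl: "sorted_list_of_set J = a # sorted_list_of_set J'"
    using sorted_list_of_set_nonempty[OF Suc.prems ne] by (simp add: a_def J'_def)
  have "KJ kappa J = (\<Prod>j\<in>J'. kappa j - kappa a) * KJ kappa J'"
    using KJ_insert_min[OF fin lt] J by simp
  also have "(\<Prod>j\<in>J'. kappa j - kappa a) = prod_list (map (\<lambda>y. y - kappa a) (map kappa (sorted_list_of_set J')))"
    using fin by (simp add: prod.distinct_set_conv_list[symmetric] o_def)
  also have "KJ kappa J' = vprod (map kappa (sorted_list_of_set J'))"
    using Suc.hyps(1)[OF cJ' fin] .
  finally show ?case by (simp add: sl)
qed

definition Pr :: "nat set \<Rightarrow> (nat \<times> nat) set" where
  "Pr X = {(i, j). i \<in> X \<and> j \<in> X \<and> i < j}"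

definition Zs :: "(nat \<Rightarrow> complex) \<Rightarrow> nat set \<Rightarrow> complex" where
  "Zs kappa X = (\<Prod>p\<in>Pr X. (kappa (snd p) - kappa (fst p))^2)"

definition Qs :: "(nat \<Rightarrow> complex) \<Rightarrow> nat set \<Rightarrow> nat set \<Rightarrow> complex" where
  "Qs kappa A B = (\<Prod>a\<in>A. \<Prod>b\<in>B. (kappa b - kappa a)^2)"

lemma finite_Pr: "finite X \<Longrightarrow> finite (Pr X)"
  by (rule finite_subset[of _ "X \<times> X"]) (auto simp: Pr_def)

lemma KJ_sq: "KJ kappa X ^ 2 = Zs kappa X"
  by (simp add: KJ_def Zs_def Pr_def prod_power_distrib)

lemma Zs_union:
  assumes "finite A" "finite B" "A \<inter> B = {}"
  shows "Zs kappa (A \<union> B) = Zs kappa A * Zs kappa B * Qs kappa A B"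
proof -
  define mm where "mm = (\<lambda>(a::nat, b::nat). (min a b, max a b))"
  have eq: "Pr (A \<union> B) = (Pr A \<union> Pr B) \<union> mm ` (A \<times> B)"
  proof (rule equalityI; rule subsetI)
    fix p assume "p \<in> Pr (A \<union> B)"
    then obtain i j where p: "p = (i,j)" "i \<in> A \<union> B" "j \<in> A \<union> B" "i < j" by (auto simp: Pr_def)
    show "p \<in> (Pr A \<union> Pr B) \<union> mm ` (A \<times> B)"
    proof (cases "i \<in> A")
      case True
      show ?thesis
      proof (cases "j \<in> A")
        case True then show ?thesis using p \<open>i \<in> A\<close> by (auto simp: Pr_def)
      next
        case False
        then have "j \<in> B" using p by auto
        then have "p = mm (i, j)" using p by (auto simp: mm_def)
        then show ?thesis using \<open>i \<in> A\<close> \<open>j \<in> B\<close> by auto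
      qed
    next
      case False
      then have iB: "i \<in> B" using p by auto
      show ?thesis
      proof (cases "j \<in> A")
        case True
        then have "p = mm (j, i)" using p by (auto simp: mm_def)
        then show ?thesis using iB \<open>j \<in> A\<close> by auto
      next
        case False
        then show ?thesis using p iB by (auto simp: Pr_def)
      qed
    qed
  next
    fix p assume "p \<in> (Pr A \<union> Pr B) \<union> mm ` (A \<times> B)"
    then show "p \<in> Pr (A \<union> B)" using assms(3)
      by (auto simp: Pr_def mm_def min_def max_def) (metis IntI empty_iff le_neq_implies_less)
  qed
  have inj: "inj_on mm (A \<times> B)"
    using assms(3) by (auto simp: inj_on_def mm_def min_def max_def split: if_splits)
  have d1: "Pr A \<inter> Pr B = {}" using assms(3) by (auto simp: Pr_def)
  have d2: "(Pr A \<union> Pr B) \<inter> mm ` (A \<times> B) = {}"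
    using assms(3) by (auto simp: Pr_def mm_def min_def max_def split: if_splits)
  have fin: "finite (Pr A)" "finite (Pr B)" "finite (mm ` (A \<times> B))"
    using assms by (auto intro: finite_Pr)
  let ?f = "\<lambda>p. (kappa (snd p) - kappa (fst p))^2"
  have "Zs kappa (A \<union> B) = prod ?f (Pr A \<union> Pr B) * prod ?f (mm ` (A \<times> B))"
    unfolding Zs_def eq by (rule prod.union_disjoint) (use fin d2 in auto)
  also have "prod ?f (Pr A \<union> Pr B) = Zs kappa A * Zs kappa B"
    unfolding Zs_def by (rule prod.union_disjoint) (use fin d1 in auto)
  also have "prod ?f (mm ` (A \<times> B)) = (\<Prod>p\<in>A \<times> B. ?f (mm p))"
    by (rule prod.reindex[OF inj, unfolded o_def])
  also have "\<dots> = (\<Prod>p\<in>A \<times> B. (kappa (snd p) - kappa (fst p))^2)"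
  proof (rule prod.cong)
    fix p assume "p \<in> A \<times> B"
    then obtain a b where "p = (a,b)" by auto
    then show "?f (mm p) = (kappa (snd p) - kappa (fst p))^2"
      by (cases "a \<le> b") (auto simp: mm_def min_def max_def power2_commute)
  qed simp
  also have "\<dots> = Qs kappa A B"
    unfolding Qs_def by (rule prod.cartesian_product[symmetric, unfolded case_prod_beta])
  finally show ?thesis .
qed

lemma offdiag:
  assumes "finite S"
  shows "(\<Prod>i\<in>S. \<Prod>l\<in>S - {i}. (kappa i - kappa l)^2) = Zs kappa S ^ 2"
proof -
  let ?f = "\<lambda>p. (kappa (snd p) - kappa (fst p))^2"
  define sw where "sw = (\<lambda>(a::nat, b::nat). (b, a))"
  have "(\<Prod>i\<in>S. \<Prod>l\<in>S - {i}. (kappa i - kappa l)^2) = (\<Prod>p\<in>Sigma S (\<lambda>i. S - {i}). (kappa (fst p) - kappa (snd p))^2)"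
    using assms by (subst prod.Sigma) (auto simp: case_prod_beta)
  also have "\<dots> = (\<Prod>p\<in>Sigma S (\<lambda>i. S - {i}). ?f p)"
    by (rule prod.cong) (auto simp: power2_commute)
  also have "Sigma S (\<lambda>i. S - {i}) = Pr S \<union> sw ` Pr S"
    by (auto simp: Pr_def sw_def image_iff)
  also have "(\<Prod>p\<in>Pr S \<union> sw ` Pr S. ?f p) = Zs kappa S * (\<Prod>p\<in>sw ` Pr S. ?f p)"
    unfolding Zs_def by (rule prod.union_disjoint) (use assms finite_Pr[OF assms] in \<open>auto simp: Pr_def sw_def\<close>)
  also have "(\<Prod>p\<in>sw ` Pr S. ?f p) = (\<Prod>p\<in>Pr S. ?f (sw p))"
    by (rule prod.reindex[unfolded o_def]) (auto simp: inj_on_def sw_def)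
  also have "\<dots> = Zs kappa S"
    unfolding Zs_def by (rule prod.cong) (auto simp: sw_def power2_commute)
  finally show ?thesis by (simp add: power2_eq_square)
qed

definition Pd :: "nat \<Rightarrow> (nat \<Rightarrow> complex) \<Rightarrow> nat \<Rightarrow> complex" where
  "Pd k kappa i = (\<Prod>l\<in>{1..k} - {i}. kappa i - kappa l)"
definition Pf :: "nat \<Rightarrow> (nat \<Rightarrow> complex) \<Rightarrow> nat \<Rightarrow> complex" where
  "Pf k kappa c = (\<Prod>l\<in>{1..k}. kappa c - kappa l)"
definition dd :: "nat \<Rightarrow> (nat \<Rightarrow> complex) \<Rightarrow> (nat \<Rightarrow> complex) \<Rightarrow> nat \<Rightarrow> complex" where
  "dd k kappa beta i = bet beta (i - 1) * Pd k kappa i ^ 2"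
definition gg :: "nat \<Rightarrow> (nat \<Rightarrow> complex) \<Rightarrow> (nat \<Rightarrow> complex) \<Rightarrow> nat \<Rightarrow> complex" where
  "gg k kappa beta c = (if c \<le> k then 1 / (bet beta (c - 1) * Pd k kappa c ^ 2)
                        else 1 / (bet beta (c - 1) * Pf k kappa c ^ 2))"

lemma final_alg:
  fixes k :: nat and kappa beta :: "nat \<Rightarrow> complex" and U S T :: "nat set"
  assumes US: "U \<union> S = {1..k}" "U \<inter> S = {}"
    and T: "finite T" "\<And>c. c \<in> T \<Longrightarrow> k < c"
    and nzI: "KJ kappa {1..k} \<noteq> 0" and nzJ: "KJ kappa (U \<union> T) \<noteq> 0"
    and nzb: "\<And>i. i \<in> {1..k} \<union> T \<Longrightarrow> bet beta (i - 1) \<noteq> 0"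
    and nzPd: "\<And>i. i \<in> {1..k} \<Longrightarrow> Pd k kappa i \<noteq> 0"
    and nzPf: "\<And>c. c \<in> T \<Longrightarrow> Pf k kappa c \<noteq> 0"
  shows "(\<Prod>i\<in>{1..k}. dd k kappa beta i) * (\<Prod>c\<in>U \<union> T. gg k kappa beta c)
           * KJ kappa (U \<union> T) / KJ kappa {1..k}
       = Zs kappa S * Zs kappa T / Qs kappa S T
           * ((\<Prod>a\<in>S. bet beta (a - 1)) / (\<Prod>b\<in>T. bet beta (b - 1)))
           * KJ kappa {1..k} / KJ kappa (U \<union> T)"
proof -
  have finU: "finite U" and finS: "finite S" using US(1) finite_atLeastAtMost
    by (metis finite_Un)+
  have UT: "U \<inter> T = {}"
  proof (rule ccontr)
    assume "U \<inter> T \<noteq> {}"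
    then obtain c where c: "c \<in> U" "c \<in> T" by blast
    then have "c \<in> {1..k}" using US(1) by blast
    then show False using T(2)[OF c(2)] by simp
  qed
  have ST: "S \<inter> T = {}"
  proof (rule ccontr)
    assume "S \<inter> T \<noteq> {}"
    then obtain c where c: "c \<in> S" "c \<in> T" by blast
    then have "c \<in> {1..k}" using US(1) by blast
    then show False using T(2)[OF c(2)] by simp
  qed
  have Uk: "\<And>c. c \<in> U \<Longrightarrow> c \<le> k" "\<And>c. c \<in> U \<Longrightarrow> c \<in> {1..k}" using US(1) by auto
  have Sk: "\<And>c. c \<in> S \<Longrightarrow> c \<in> {1..k}" using US(1) by auto
  define bS where "bS = (\<Prod>a\<in>S. bet beta (a - 1))"
  define bT where "bT = (\<Prod>b\<in>T. bet beta (b - 1))"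
  define PS where "PS = (\<Prod>i\<in>S. Pd k kappa i ^ 2)"
  define PT where "PT = (\<Prod>c\<in>T. Pf k kappa c ^ 2)"
  have d: "(\<Prod>i\<in>{1..k}. dd k kappa beta i) = (\<Prod>i\<in>U. dd k kappa beta i) * bS * PS"
    unfolding US(1)[symmetric]
    by (subst prod.union_disjoint) (auto simp: finU finS US(2) bS_def PS_def dd_def prod.distrib)
  have g: "(\<Prod>c\<in>U \<union> T. gg k kappa beta c) = (\<Prod>c\<in>U. gg k kappa beta c) / (bT * PT)"
  proof -
    have "(\<Prod>c\<in>T. gg k kappa beta c) = (\<Prod>c\<in>T. 1 / (bet beta (c - 1) * Pf k kappa c ^ 2))"
    proof (rule prod.cong[OF refl])
      fix c assume "c \<in> T"
      then have "\<not> c \<le> k" using T(2) by (simp add: not_le)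
      then show "gg k kappa beta c = 1 / (bet beta (c - 1) * Pf k kappa c ^ 2)" by (simp add: gg_def)
    qed
    also have "\<dots> = 1 / (bT * PT)" by (simp add: prod_dividef prod.distrib bT_def PT_def)
    finally show ?thesis by (subst prod.union_disjoint) (auto simp: finU T(1) UT)
  qed
  have u: "(\<Prod>i\<in>U. dd k kappa beta i) * (\<Prod>c\<in>U. gg k kappa beta c) = 1"
  proof -
    have "(\<Prod>i\<in>U. dd k kappa beta i) * (\<Prod>c\<in>U. gg k kappa beta c) = (\<Prod>i\<in>U. dd k kappa beta i * gg k kappa beta i)"
      by (simp add: prod.distrib)
    also have "\<dots> = (\<Prod>i\<in>U. 1)"
      by (rule prod.cong) (use nzb nzPd Uk in \<open>auto simp: dd_def gg_def\<close>)
    finally show ?thesis by simp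
  qed
  have PS_eq: "PS = Qs kappa U S * Zs kappa S ^ 2"
  proof -
    have "PS = (\<Prod>i\<in>S. (\<Prod>l\<in>U. (kappa i - kappa l)^2) * (\<Prod>l\<in>S - {i}. (kappa i - kappa l)^2))"
      unfolding PS_def
    proof (rule prod.cong[OF refl])
      fix i assume i: "i \<in> S"
      have "{1..k} - {i} = U \<union> (S - {i})" using US i by auto
      then have "Pd k kappa i ^ 2 = (\<Prod>l\<in>U \<union> (S - {i}). (kappa i - kappa l)^2)"
        by (simp add: Pd_def prod_power_distrib)
      also have "\<dots> = (\<Prod>l\<in>U. (kappa i - kappa l)^2) * (\<Prod>l\<in>S - {i}. (kappa i - kappa l)^2)"
        by (rule prod.union_disjoint) (use finU finS US(2) in auto)
      finally show "Pd k kappa i ^ 2 = \<dots>" .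
    qed
    also have "\<dots> = (\<Prod>i\<in>S. \<Prod>l\<in>U. (kappa i - kappa l)^2) * Zs kappa S ^ 2"
      by (simp add: prod.distrib offdiag[OF finS])
    also have "(\<Prod>i\<in>S. \<Prod>l\<in>U. (kappa i - kappa l)^2) = Qs kappa U S"
      unfolding Qs_def by (rule prod.swap)
    finally show ?thesis .
  qed
  have PT_eq: "PT = Qs kappa U T * Qs kappa S T"
  proof -
    have "PT = (\<Prod>c\<in>T. \<Prod>l\<in>{1..k}. (kappa c - kappa l)^2)"
      by (simp add: PT_def Pf_def prod_power_distrib)
    also have "\<dots> = Qs kappa {1..k} T" unfolding Qs_def by (rule prod.swap)
    also have "\<dots> = Qs kappa U T * Qs kappa S T"
      unfolding US(1)[symmetric] Qs_def by (rule prod.union_disjoint) (use finU finS US(2) in auto)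
    finally show ?thesis .
  qed
  have ZJ: "KJ kappa (U \<union> T) ^ 2 = Zs kappa U * Zs kappa T * Qs kappa U T"
    by (simp add: KJ_sq Zs_union finU T(1) UT)
  have ZI: "KJ kappa {1..k} ^ 2 = Zs kappa U * Zs kappa S * Qs kappa U S"
    unfolding KJ_sq US(1)[symmetric] by (simp add: Zs_union finU finS US(2))
  have nzbT: "bT \<noteq> 0" using nzb by (simp add: bT_def prod_zero_iff T(1))
  have nzPT: "PT \<noteq> 0" using nzPf by (simp add: PT_def prod_zero_iff T(1))
  have nzQ: "Qs kappa S T \<noteq> 0" using nzPT PT_eq by auto
  have lhs: "(\<Prod>i\<in>{1..k}. dd k kappa beta i) * (\<Prod>c\<in>U \<union> T. gg k kappa beta c) = bS * PS / (bT * PT)"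
    using u unfolding d g by (simp add: field_simps)
  show ?thesis
    unfolding lhs bS_def[symmetric] bT_def[symmetric]
    using nzI nzJ nzbT nzPT nzQ ZJ ZI PS_eq PT_eq
    by (simp add: field_simps power2_eq_square)
qed

lemma prod_nth_set: "distinct xs \<Longrightarrow> (\<Prod>l<length xs. f (xs!l)) = (\<Prod>x\<in>set xs. f x)"
  by (simp add: prod.distinct_set_conv_list prod.list_conv_set_nth atLeast0LessThan)

lemma pairs_sorted:
  assumes "finite X" "xs = sorted_list_of_set X"
  shows "(\<Prod>p\<in>{(l, m). l < m \<and> m < length xs}. f (xs ! fst p) (xs ! snd p))
       = (\<Prod>p\<in>Pr X. f (fst p) (snd p))"
proof -
  define h where "h = (\<lambda>(l::nat, m::nat). (xs ! l, xs ! m))"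
  have ss: "sorted_wrt (<) xs" using assms by simp
  have dist: "distinct xs" using assms by simp
  have setx: "set xs = X" using assms by simp
  have "bij_betw h {(l, m). l < m \<and> m < length xs} (Pr X)"
  proof (rule bij_betw_imageI)
    show "inj_on h {(l, m). l < m \<and> m < length xs}"
      using dist by (auto simp: inj_on_def h_def nth_eq_iff_index_eq)
    show "h ` {(l, m). l < m \<and> m < length xs} = Pr X"
    proof (rule equalityI; rule subsetI)
      fix p assume "p \<in> h ` {(l, m). l < m \<and> m < length xs}"
      then obtain l m where "p = (xs!l, xs!m)" "l < m" "m < length xs" by (auto simp: h_def)
      then show "p \<in> Pr X" using ss setx by (auto simp: Pr_def sorted_wrt_iff_nth_less)
    next
      fix p assume "p \<in> Pr X"
      then obtain a b where p: "p = (a,b)" "a \<in> X" "b \<in> X" "a < b" by (auto simp: Pr_def)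
      obtain l where l: "l < length xs" "xs ! l = a" using p setx by (auto simp: in_set_conv_nth)
      obtain m where m: "m < length xs" "xs ! m = b" using p setx by (auto simp: in_set_conv_nth)
      have "l < m"
      proof (rule ccontr)
        assume "\<not> l < m"
        then have "m \<le> l" by simp
        then have "xs ! m \<le> xs ! l" using sorted_nth_mono[of xs m l] ss l
          by (simp add: strict_sorted_imp_sorted)
        then show False using p l m by simp
      qed
      then show "p \<in> h ` {(l, m). l < m \<and> m < length xs}"
        using l m p by (intro rev_image_eqI[of "(l,m)"]) (auto simp: h_def)
    qed
  qed
  then show ?thesis
    by (subst prod.reindex_bij_betw[symmetric]) (auto simp: h_def case_prod_beta)
qed

lemma det_scale:
  assumes N: "N \<in> carrier_mat n n"
  shows "det (mat n n (\<lambda>(i,j). a i * b j * N $$ (i,j))) = (\<Prod>i<n. a i) * (\<Prod>j<n. b j) * (det N :: complex)"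
proof -
  have M: "mat n n (\<lambda>(i,j). a i * b j * N $$ (i,j)) \<in> carrier_mat n n" by simp
  have "det (mat n n (\<lambda>(i,j). a i * b j * N $$ (i,j)))
      = (\<Sum>p | p permutes {0..<n}. of_int (sign p) * (\<Prod>i = 0..<n. a i * b (p i) * N $$ (i, p i)))"
    unfolding det_def'[OF M] by (intro sum.cong refl) (auto intro!: prod.cong dest: permutes_in_image)
  also have "\<dots> = (\<Sum>p | p permutes {0..<n}. (\<Prod>i<n. a i) * (\<Prod>j<n. b j) * (of_int (sign p) * (\<Prod>i = 0..<n. N $$ (i, p i))))"
  proof (rule sum.cong[OF refl])
    fix p assume "p \<in> {p. p permutes {0..<n}}"
    then have p: "p permutes {0..<n}" by simp
    have "(\<Prod>i = 0..<n. b (p i)) = (\<Prod>j = 0..<n. b j)"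
      using prod.permute[OF p, of b] by (simp add: o_def)
    then show "of_int (sign p) * (\<Prod>i = 0..<n. a i * b (p i) * N $$ (i, p i)) =
      (\<Prod>i<n. a i) * (\<Prod>j<n. b j) * (of_int (sign p) * (\<Prod>i = 0..<n. N $$ (i, p i)))"
      by (simp add: prod.distrib atLeast0LessThan)
  qed
  also have "\<dots> = (\<Prod>i<n. a i) * (\<Prod>j<n. b j) * det N"
    unfolding det_def'[OF N] by (simp add: sum_distrib_left)
  finally show ?thesis .
qed

definition lag :: "nat \<Rightarrow> (nat \<Rightarrow> complex) \<Rightarrow> nat \<Rightarrow> complex poly" where
  "lag k kappa i = smult (1 / Pd k kappa i) (\<Prod>l\<in>{1..k} - {i}. [:- kappa l, 1:])"

lemma poly_lag: "poly (lag k kappa i) y = (\<Prod>l\<in>{1..k} - {i}. y - kappa l) / Pd k kappa i"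
  by (simp add: lag_def poly_prod)

lemma degree_lag:
  assumes "i \<in> {1..k}" shows "degree (lag k kappa i) < k"
proof -
  have "degree (lag k kappa i) \<le> degree (\<Prod>l\<in>{1..k} - {i}. [:- kappa l, 1:])"
    by (simp add: lag_def)
  also have "\<dots> \<le> sum (degree \<circ> (\<lambda>l. [:- kappa l, 1:])) ({1..k} - {i})"
    by (rule degree_prod_sum_le) simp
  also have "\<dots> = card ({1..k} - {i})" by simp
  also have "\<dots> < k"
    using assms by (simp add: card_Diff_singleton)
  finally show ?thesis .
qed

lemma poly_sum_k:
  fixes p :: "complex poly"
  assumes "degree p < k" shows "poly p y = (\<Sum>m<k. coeff p m * y ^ m)"
proof -
  have "poly p y = (\<Sum>m\<le>degree p. coeff p m * y ^ m)" by (rule poly_altdef)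
  also have "\<dots> = (\<Sum>m<k. coeff p m * y ^ m)"
    by (rule sum.mono_neutral_left) (use assms in \<open>auto simp: coeff_eq_0\<close>)
  finally show ?thesis .
qed

definition Lm :: "nat \<Rightarrow> (nat \<Rightarrow> complex) \<Rightarrow> complex mat" where
  "Lm k kappa = mat k k (\<lambda>(r,m). coeff (lag k kappa (r+1)) m)"

lemma Lm_carrier: "Lm k kappa \<in> carrier_mat k k" by (simp add: Lm_def)
lemma vand_carrier: "length ys = k \<Longrightarrow> vand ys \<in> carrier_mat k k" by (simp add: vand_def)

lemma Lm_vand:
  assumes "length ys = k" "1 \<le> k"
  shows "Lm k kappa * vand ys = mat k k (\<lambda>(r,b). poly (lag k kappa (r+1)) (ys!b))"
proof (rule eq_matI)
  fix r b assume rb: "r < dim_row (mat k k (\<lambda>(r,b). poly (lag k kappa (r+1)) (ys!b)))"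
     "b < dim_col (mat k k (\<lambda>(r,b). poly (lag k kappa (r+1)) (ys!b)))"
  then have r: "r < k" and b: "b < k" by auto
  have "(Lm k kappa * vand ys) $$ (r,b) = row (Lm k kappa) r \<bullet> col (vand ys) b"
    using r b Lm_carrier[of k kappa] vand_carrier[OF assms(1)] by (subst index_mult_mat) auto
  also have "\<dots> = (\<Sum>m\<in>{0..<k}. row (Lm k kappa) r $ m * col (vand ys) b $ m)"
    using vand_carrier[OF assms(1)] by (simp add: scalar_prod_def)
  also have "\<dots> = (\<Sum>m<k. coeff (lag k kappa (r+1)) m * (ys!b)^m)"
    by (rule sum.cong) (use r b assms(1) in \<open>auto simp: Lm_def vand_def\<close>)
  also have "\<dots> = poly (lag k kappa (r+1)) (ys!b)"
    by (rule poly_sum_k[symmetric]) (rule degree_lag, use r in auto)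
  finally show "(Lm k kappa * vand ys) $$ (r,b) = mat k k (\<lambda>(r,b). poly (lag k kappa (r+1)) (ys!b)) $$ (r,b)"
    using r b by simp
qed (use assms in \<open>auto simp: Lm_def vand_def\<close>)

lemma Pd_nz:
  assumes "inj_on kappa {1..k}" "i \<in> {1..k}" shows "Pd k kappa i \<noteq> 0"
proof -
  have "\<forall>l\<in>{1..k} - {i}. kappa i - kappa l \<noteq> 0"
    using assms inj_on_contraD[OF assms(1)] by fastforce
  then show ?thesis by (simp add: Pd_def)
qed

lemma lag_delta:
  assumes "inj_on kappa {1..k}" "i \<in> {1..k}" "c \<in> {1..k}"
  shows "poly (lag k kappa i) (kappa c) = (if i = c then 1 else 0)"
proof (cases "i = c")
  case True
  have "poly (lag k kappa i) (kappa c) = Pd k kappa i / Pd k kappa i"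
    using True by (simp add: poly_lag Pd_def)
  then show ?thesis using Pd_nz[OF assms(1,2)] True by simp
next
  case False
  have "(\<Prod>l\<in>{1..k} - {i}. kappa c - kappa l) = 0"
    by (rule prod_zero) (use assms(3) False in auto)
  then show ?thesis using False by (simp add: poly_lag)
qed

lemma det_Lm:
  assumes "inj_on kappa {1..k}" "1 \<le> k"
  shows "det (Lm k kappa) * KJ kappa {1..k} = 1"
proof -
  define cs where "cs = sorted_list_of_set {1..k}"
  have "{1..k} = {1..<Suc k}" by auto
  then have csl: "cs = [1..<Suc k]" by (simp only: cs_def sorted_list_of_set_range)
  have len: "length cs = k" by (simp add: csl)
  have csn: "\<And>b. b < k \<Longrightarrow> cs ! b = b + 1"
    by (simp add: csl nth_upt del: upt_Suc)
  have "mat k k (\<lambda>(r,b). poly (lag k kappa (r+1)) (map kappa cs ! b)) = 1\<^sub>m k"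
  proof (rule eq_matI)
    fix r b assume "r < dim_row (1\<^sub>m k :: complex mat)" "b < dim_col (1\<^sub>m k :: complex mat)"
    then have r: "r < k" and b: "b < k" by auto
    have "poly (lag k kappa (r+1)) (map kappa cs ! b) = poly (lag k kappa (r+1)) (kappa (b+1))"
      using b len csn by simp
    also have "\<dots> = (if r + 1 = b + 1 then 1 else 0)"
      by (rule lag_delta[OF assms(1)]) (use r b in auto)
    finally show "mat k k (\<lambda>(r,b). poly (lag k kappa (r+1)) (map kappa cs ! b)) $$ (r,b) = 1\<^sub>m k $$ (r,b)"
      using r b by simp
  qed auto
  then have e: "Lm k kappa * vand (map kappa cs) = 1\<^sub>m k"
    using Lm_vand[of "map kappa cs" k kappa] len assms(2) by simp
  have "det (Lm k kappa * vand (map kappa cs)) = det (Lm k kappa) * det (vand (map kappa cs))"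
    by (rule det_mult[OF Lm_carrier vand_carrier]) (simp add: len)
  moreover have "det (vand (map kappa cs)) = KJ kappa {1..k}"
    by (simp add: det_vand KJ_vprod cs_def)
  ultimately show ?thesis using e by simp
qed

lemma KJ_nz:
  assumes "inj_on kappa X" "finite X" shows "KJ kappa X \<noteq> 0"
proof -
  have fin: "finite {(i, j). i \<in> X \<and> j \<in> X \<and> i < j}"
    by (rule finite_subset[of _ "X \<times> X"]) (use assms(2) in auto)
  have "\<forall>p\<in>{(i, j). i \<in> X \<and> j \<in> X \<and> i < j}. kappa (snd p) - kappa (fst p) \<noteq> 0"
    using inj_on_contraD[OF assms(1)] by fastforce
  then show ?thesis using fin by (simp add: KJ_def)
qed

lemma alg_aux:
  fixes b1 b2 P Q D :: complex
  assumes "b1 \<noteq> 0" "b2 \<noteq> 0" "P \<noteq> 0" "Q \<noteq> 0" "D \<noteq> 0"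
  shows "b1 / (b2 * D^2) * (P / Q) = (b1 * P^2) * (1 / (b2 * (D * Q)^2)) * (Q / P)"
  using assms by (simp add: field_simps power2_eq_square)

lemma Aent_eq:
  assumes inj: "inj_on kappa {1..n}" and kn: "k < n"
    and betnz: "\<And>j. j \<in> {1..n} \<Longrightarrow> bet beta (j - 1) \<noteq> 0"
    and i: "i \<in> {1..k}" and c: "c \<in> {1..n}"
  shows "Aent k kappa beta i c = dd k kappa beta i * gg k kappa beta c * poly (lag k kappa i) (kappa c)"
proof -
  have injk: "inj_on kappa {1..k}" by (rule inj_on_subset[OF inj]) (use kn in auto)
  have in_n: "i \<in> {1..n}" using i kn by auto
  have Pdnz: "Pd k kappa i \<noteq> 0" by (rule Pd_nz[OF injk i])
  have bi: "bet beta (i - 1) \<noteq> 0" using betnz in_n by blast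
  have bc: "bet beta (c - 1) \<noteq> 0" using betnz c by blast
  show ?thesis
  proof (cases "c \<le> k")
    case True
    then have ck: "c \<in> {1..k}" using c by auto
    show ?thesis
    proof (cases "i = c")
      case True
      then show ?thesis using lag_delta[OF injk i ck] \<open>c \<le> k\<close> Pdnz bi
        by (simp add: Aent_def dd_def gg_def)
    next
      case False
      then show ?thesis using lag_delta[OF injk i ck] \<open>c \<le> k\<close>
        by (simp add: Aent_def)
    qed
  next
    case False
    define Q where "Q = (\<Prod>l\<in>{1..k} - {i}. kappa c - kappa l)"
    have Pf: "Pf k kappa c = (kappa c - kappa i) * Q"
      unfolding Pf_def Q_def by (rule prod.remove) (use i in auto)
    have nzci: "kappa c - kappa i \<noteq> 0"
      using inj_on_contraD[OF inj, of c i] c in_n False i by auto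
    have "\<forall>l\<in>{1..k} - {i}. kappa c - kappa l \<noteq> 0"
      using inj_on_contraD[OF inj, of c] c False kn by fastforce
    then have Qnz: "Q \<noteq> 0" by (simp add: Q_def)
    have pr: "(\<Prod>l\<in>{1..k} - {i}. (kappa i - kappa l) / (kappa c - kappa l)) = Pd k kappa i / Q"
      by (simp add: prod_dividef Pd_def Q_def)
    have pl: "poly (lag k kappa i) (kappa c) = Q / Pd k kappa i" by (simp only: poly_lag Q_def)
    have "Aent k kappa beta i c = bet beta (i - 1) / (bet beta (c - 1) * (kappa c - kappa i)^2) *
           (\<Prod>l\<in>{1..k} - {i}. (kappa i - kappa l) / (kappa c - kappa l))"
      by (subst Aent_def, subst if_not_P[OF False], rule refl)
    also have "\<dots> = bet beta (i - 1) / (bet beta (c - 1) * (kappa c - kappa i)^2) * (Pd k kappa i / Q)"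
      by (simp only: pr)
    also have "\<dots> = dd k kappa beta i * gg k kappa beta c * poly (lag k kappa i) (kappa c)"
      unfolding pl using False Pdnz Qnz nzci bi bc
      unfolding dd_def gg_def Pf using alg_aux[OF bi bc Pdnz Qnz nzci] by simp
    finally show ?thesis .
  qed
qed

lemma alpha_eq:
  assumes finJ: "finite J" and cc: "card ({1..k} - J) = card (J - {1..k})"
  shows "alphaJ k kappa beta J =
     Zs kappa ({1..k} - J) * Zs kappa (J - {1..k}) / Qs kappa ({1..k} - J) (J - {1..k})
     * ((\<Prod>a\<in>{1..k} - J. bet beta (a - 1)) / (\<Prod>b\<in>J - {1..k}. bet beta (b - 1)))"
proof -
  define S where "S = {1..k} - J"
  define T where "T = J - {1..k}"
  define il where "il = sorted_list_of_set S"
  define jl where "jl = sorted_list_of_set T"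
  have finS: "finite S" and finT: "finite T" using finJ by (auto simp: S_def T_def)
  have lil: "length il = card S" and ljl: "length jl = card T" by (simp_all add: il_def jl_def)
  have cST: "card S = card T" using cc by (simp add: S_def T_def)
  define s where "s = length jl"
  have ls: "length il = s" using lil ljl cST by (simp add: s_def)
  have dis: "distinct il" "set il = S" using finS by (simp_all add: il_def)
  have djs: "distinct jl" "set jl = T" using finT by (simp_all add: jl_def)
  have num: "(\<Prod>p\<in>{(l, m). l < m \<and> m < s}.
             (kappa (il ! snd p) - kappa (il ! fst p))^2 * (kappa (jl ! snd p) - kappa (jl ! fst p))^2)
           = Zs kappa S * Zs kappa T"
  proof -
    have "(\<Prod>p\<in>{(l, m). l < m \<and> m < s}. (kappa (il ! snd p) - kappa (il ! fst p))^2) = Zs kappa S"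
      using pairs_sorted[OF finS il_def, of "\<lambda>a b. (kappa b - kappa a)^2"] ls by (simp add: Zs_def)
    moreover have "(\<Prod>p\<in>{(l, m). l < m \<and> m < s}. (kappa (jl ! snd p) - kappa (jl ! fst p))^2) = Zs kappa T"
      using pairs_sorted[OF finT jl_def, of "\<lambda>a b. (kappa b - kappa a)^2"] by (simp add: Zs_def s_def)
    ultimately show ?thesis by (simp add: prod.distrib)
  qed
  have den: "(\<Prod>p\<in>{..<s} \<times> {..<s}. (kappa (jl ! snd p) - kappa (il ! fst p))^2) = Qs kappa S T"
  proof -
    have "(\<Prod>p\<in>{..<s} \<times> {..<s}. (kappa (jl ! snd p) - kappa (il ! fst p))^2)
        = (\<Prod>l<s. \<Prod>m<s. (kappa (jl ! m) - kappa (il ! l))^2)"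
      by (simp add: prod.cartesian_product case_prod_beta)
    also have "\<dots> = (\<Prod>l<s. \<Prod>b\<in>T. (kappa b - kappa (il ! l))^2)"
      using prod_nth_set[OF djs(1), of "\<lambda>b. (kappa b - kappa _)^2"] djs(2) by (simp add: s_def)
    also have "\<dots> = (\<Prod>a\<in>S. \<Prod>b\<in>T. (kappa b - kappa a)^2)"
      using prod_nth_set[OF dis(1), of "\<lambda>a. \<Prod>b\<in>T. (kappa b - kappa a)^2"] dis(2) ls by simp
    finally show ?thesis by (simp add: Qs_def)
  qed
  have bb: "(\<Prod>l<s. bet beta (il ! l - 1) / bet beta (jl ! l - 1))
      = (\<Prod>a\<in>S. bet beta (a - 1)) / (\<Prod>b\<in>T. bet beta (b - 1))"
  proof -
    have "(\<Prod>l<s. bet beta (il ! l - 1) / bet beta (jl ! l - 1))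
       = (\<Prod>l<s. bet beta (il ! l - 1)) / (\<Prod>l<s. bet beta (jl ! l - 1))"
      by (rule prod_dividef)
    also have "(\<Prod>l<s. bet beta (il ! l - 1)) = (\<Prod>a\<in>S. bet beta (a - 1))"
      using prod_nth_set[OF dis(1), of "\<lambda>a. bet beta (a - 1)"] dis(2) ls by simp
    also have "(\<Prod>l<s. bet beta (jl ! l - 1)) = (\<Prod>b\<in>T. bet beta (b - 1))"
      using prod_nth_set[OF djs(1), of "\<lambda>a. bet beta (a - 1)"] djs(2) by (simp add: s_def)
    finally show ?thesis .
  qed
  show ?thesis
    unfolding alphaJ_def Let_def S_def[symmetric] T_def[symmetric] il_def[symmetric] jl_def[symmetric]
      s_def[symmetric] num den bb ..
qed

theorem proposition5p2:
  fixes k n :: nat and kappa beta :: "nat \<Rightarrow> complex" and J :: "nat set"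
  assumes "1 \<le> k" and "k < n"
    and "inj_on kappa {1..n}"
    and "\<And>i. i \<in> {1..n-1} \<Longrightarrow> beta i \<noteq> 0"
    and "J \<subseteq> {1..n}" and "card J = k"
  shows "minorA k n kappa beta J = alphaJ k kappa beta J * KJ kappa {1..k} / KJ kappa J"
proof -
  note k1 = assms(1) and kn = assms(2) and inj = assms(3) and bnz = assms(4)
    and Jsub = assms(5) and cJ = assms(6)
  have finJ: "finite J" using Jsub finite_subset by blast
  define cs where "cs = sorted_list_of_set J"
  have len: "length cs = k" using cJ finJ by (simp add: cs_def)
  have setcs: "set cs = J" and dcs: "distinct cs" using finJ by (simp_all add: cs_def)
  have csJ: "\<And>b. b < k \<Longrightarrow> cs ! b \<in> J" using setcs len nth_mem by blast
  have csn: "\<And>b. b < k \<Longrightarrow> cs ! b \<in> {1..n}" using csJ Jsub by blast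
  have injk: "inj_on kappa {1..k}" by (rule inj_on_subset[OF inj]) (use kn in auto)
  have betnz: "\<And>j. j \<in> {1..n} \<Longrightarrow> bet beta (j - 1) \<noteq> 0"
  proof -
    fix j :: nat assume j: "j \<in> {1..n}"
    show "bet beta (j - 1) \<noteq> 0"
    proof (cases "j = 1")
      case True then show ?thesis by (simp add: bet_def)
    next
      case False
      then have "j - 1 \<in> {1..n-1}" using j by auto
      then show ?thesis using bnz by (simp add: bet_def)
    qed
  qed
  define Nj where "Nj = Lm k kappa * vand (map kappa cs)"
  have Nj_eq: "Nj = mat k k (\<lambda>(r,b). poly (lag k kappa (r+1)) (map kappa cs ! b))"
    unfolding Nj_def by (rule Lm_vand) (use len k1 in auto)
  have Njc: "Nj \<in> carrier_mat k k" by (simp add: Nj_eq)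
  have detNj: "det Nj = KJ kappa J / KJ kappa {1..k}"
  proof -
    have "det Nj = det (Lm k kappa) * det (vand (map kappa cs))"
      unfolding Nj_def by (rule det_mult[OF Lm_carrier vand_carrier]) (simp add: len)
    also have "det (vand (map kappa cs)) = KJ kappa J"
      by (simp add: det_vand KJ_vprod[OF finJ] cs_def)
    finally show ?thesis
      using det_Lm[OF injk k1] KJ_nz[OF injk] by (simp add: field_simps)
  qed
  have M_eq: "mat k k (\<lambda>(r, c). Amat k n kappa beta $$ (r, cs ! c - 1))
      = mat k k (\<lambda>(r,b). dd k kappa beta (r+1) * gg k kappa beta (cs!b) * Nj $$ (r,b))"
  proof (rule eq_matI)
    fix r b assume "r < dim_row (mat k k (\<lambda>(r,b). dd k kappa beta (r+1) * gg k kappa beta (cs!b) * Nj $$ (r,b)))"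
      "b < dim_col (mat k k (\<lambda>(r,b). dd k kappa beta (r+1) * gg k kappa beta (cs!b) * Nj $$ (r,b)))"
    then have r: "r < k" and b: "b < k" by auto
    have c: "cs ! b \<in> {1..n}" using csn[OF b] .
    have "Amat k n kappa beta $$ (r, cs ! b - 1) = Aent k kappa beta (r + 1) (cs ! b)"
    proof -
      have c1: "cs ! b - 1 < n" "Suc (cs ! b - 1) = cs ! b" using c by auto
      have "Amat k n kappa beta $$ (r, cs ! b - 1) = Aent k kappa beta (r + 1) (cs ! b - 1 + 1)"
        unfolding Amat_def using r c1(1) kn by (subst index_mat) auto
      then show ?thesis using c1(2) by simp
    qed
    also have "\<dots> = dd k kappa beta (r+1) * gg k kappa beta (cs!b) * poly (lag k kappa (r+1)) (kappa (cs ! b))"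
      by (rule Aent_eq[OF inj kn betnz]) (use r c in auto)
    also have "\<dots> = dd k kappa beta (r+1) * gg k kappa beta (cs!b) * Nj $$ (r,b)"
      using r b len by (simp add: Nj_eq)
    finally show "mat k k (\<lambda>(r, c). Amat k n kappa beta $$ (r, cs ! c - 1)) $$ (r,b)
      = mat k k (\<lambda>(r,b). dd k kappa beta (r+1) * gg k kappa beta (cs!b) * Nj $$ (r,b)) $$ (r,b)"
      using r b by simp
  qed auto
  have minor: "minorA k n kappa beta J
      = (\<Prod>i\<in>{1..k}. dd k kappa beta i) * (\<Prod>c\<in>J. gg k kappa beta c) * KJ kappa J / KJ kappa {1..k}"
  proof -
    have "minorA k n kappa beta J = (\<Prod>r<k. dd k kappa beta (r+1)) * (\<Prod>b<k. gg k kappa beta (cs!b)) * det Nj"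
      unfolding minorA_def Let_def cs_def[symmetric] M_eq by (rule det_scale[OF Njc])
    also have "(\<Prod>r<k. dd k kappa beta (r+1)) = (\<Prod>i\<in>{1..k}. dd k kappa beta i)"
      using prod.reindex[of Suc "{..<k}" "dd k kappa beta"] by (simp add: image_Suc_lessThan)
    also have "(\<Prod>b<k. gg k kappa beta (cs!b)) = (\<Prod>c\<in>J. gg k kappa beta c)"
      using prod_nth_set[OF dcs, of "gg k kappa beta"] len setcs by simp
    finally show ?thesis by (simp add: detNj)
  qed
  define U where "U = J \<inter> {1..k}"
  define S where "S = {1..k} - J"
  define T where "T = J - {1..k}"
  have UT: "U \<union> T = J" by (auto simp: U_def T_def)
  have US: "U \<union> S = {1..k}" "U \<inter> S = {}" by (auto simp: U_def S_def)
  have finT: "finite T" using finJ by (simp add: T_def)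
  have Tk: "\<And>c. c \<in> T \<Longrightarrow> k < c" using Jsub by (force simp: T_def)
  have Tn: "T \<subseteq> {1..n}" using Jsub by (auto simp: T_def)
  have cc: "card ({1..k} - J) = card (J - {1..k})"
  proof -
    have "finite U" "finite S" by (simp_all add: U_def S_def)
    then have "card U + card S = k" using US card_Un_disjoint[of U S] by simp
    moreover have "card U + card T = k"
    proof -
      have "finite U" "finite T" "U \<inter> T = {}" using finJ by (auto simp: U_def T_def)
      then have "card (U \<union> T) = card U + card T" by (rule card_Un_disjoint)
      then show ?thesis using UT cJ by simp
    qed
    ultimately show ?thesis by (simp add: S_def T_def)
  qed
  have nzPf: "\<And>c. c \<in> T \<Longrightarrow> Pf k kappa c \<noteq> 0"
  proof -
    fix c assume c: "c \<in> T"
    have cn: "c \<in> {1..n}" using c Tn by blast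
    have "\<forall>l\<in>{1..k}. kappa c - kappa l \<noteq> 0"
    proof
      fix l assume l: "l \<in> {1..k}"
      then have "l \<in> {1..n}" "c \<noteq> l" using kn Tk[OF c] by auto
      then show "kappa c - kappa l \<noteq> 0" using inj_on_contraD[OF inj _ cn] by auto
    qed
    then show "Pf k kappa c \<noteq> 0" by (simp add: Pf_def)
  qed
  have nzb: "\<And>i. i \<in> {1..k} \<union> T \<Longrightarrow> bet beta (i - 1) \<noteq> 0"
    using betnz Tn kn by auto
  have injJ: "inj_on kappa (U \<union> T)" by (rule inj_on_subset[OF inj]) (use UT Jsub in auto)
  have "minorA k n kappa beta J
      = (\<Prod>i\<in>{1..k}. dd k kappa beta i) * (\<Prod>c\<in>U \<union> T. gg k kappa beta c) * KJ kappa (U \<union> T) / KJ kappa {1..k}"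
    using minor UT by simp
  also have "\<dots> = Zs kappa S * Zs kappa T / Qs kappa S T
           * ((\<Prod>a\<in>S. bet beta (a - 1)) / (\<Prod>b\<in>T. bet beta (b - 1)))
           * KJ kappa {1..k} / KJ kappa (U \<union> T)"
    by (rule final_alg[OF US finT Tk KJ_nz[OF injk] KJ_nz[OF injJ] nzb Pd_nz[OF injk] nzPf])
      (use finJ UT in auto)
  also have "\<dots> = alphaJ k kappa beta J * KJ kappa {1..k} / KJ kappa J"
    unfolding alpha_eq[OF finJ cc] S_def[symmetric] T_def[symmetric] UT ..
  finally show ?thesis .
qed

end
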